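(* For every $\varepsilon\in[0,1]$, $$\min_{P,Q:\ d_{\mathrm{TV}}(P,Q)=\varepsilon}\overline{C}(P,Q)=2\,d\!\left(\tfrac{1-\varepsilon}{2}\,\Big\|\,\tfrac12\right)=(1+\varepsilon)\log(1+\varepsilon)+(1-\varepsilon)\log(1-\varepsilon),$$ where the minimum is over pairs of probability distributions on a common countable set, and it is achieved by $P=\left(\frac{1-\varepsilon}{2},\frac{1+\varepsilon}{2}\right)$, $Q=\left(\frac{1+\varepsilon}{2},\frac{1-\varepsilon}{2}\right)$.
   Context: $d_{\mathrm{TV}}(P,Q)=\frac12\sum_x |P(x)-Q(x)|$. The relative entropy is $D(P\|Q)=\sum_x P(x)\log\frac{P(x)}{Q(x)}$. The capacitory discrimination (Jensen–Shannon divergence) is $\overline{C}(P,Q)=D\!\left(P\,\|\,\frac{P+Q}{2}\right)+D\!\left(Q\,\|\,\frac{P+Q}{2}\right)$. For $p,q\in[0,1]$, $d(p\|q)=p\log\frac pq+(1-p)\log\frac{1-p}{1-q}$ is the binary relative entropy, with $0\log 0=0$. Logarithms are natural. *)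

theory Defs
  imports "HOL-Probability.Probability"
begin

definition tv_dist :: "'a pmf \<Rightarrow> 'a pmf \<Rightarrow> real" where
  "tv_dist P Q = (1/2) * infsum (\<lambda>x. \<bar>pmf P x - pmf Q x\<bar>) UNIV"

definition rel_entropy :: "('a \<Rightarrow> real) \<Rightarrow> ('a \<Rightarrow> real) \<Rightarrow> real" where
  "rel_entropy p q = infsum (\<lambda>x. if p x = 0 then 0 else p x * ln (p x / q x)) UNIV"

definition cap_disc :: "'a pmf \<Rightarrow> 'a pmf \<Rightarrow> real" where
  "cap_disc P Q =
     (let M = (\<lambda>x. (pmf P x + pmf Q x) / 2)
      in rel_entropy (pmf P) M + rel_entropy (pmf Q) M)"

definition bin_rel_entropy :: "real \<Rightarrow> real \<Rightarrow> real" where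
  "bin_rel_entropy p q =
     (if p = 0 then 0 else p * ln (p / q)) +
     (if 1 - p = 0 then 0 else (1 - p) * ln ((1 - p) / (1 - q)))"

end

theory Submission
  imports Defs
begin

lemma pmf_summ: "pmf p summable_on UNIV"
  using abs_summable_equivalent[of "pmf p" UNIV] pmf_abs_summable[of p UNIV]
  by (metis abs_summable_summable)
lemma pmf_infsum: "infsum (pmf p) UNIV = 1"
  using infsetsum_infsum[of "pmf p" UNIV] pmf_abs_summable[of p UNIV] infsetsum_pmf_eq_1[of p UNIV]
  by simp

lemma gibbs: fixes p k :: real assumes "p > 0" "k > 0" shows "p - k \<le> p * ln (p / k)"
proof -
  have "ln (k/p) \<le> k/p - 1" using assms by (intro ln_le_minus_one) simp
  moreover have "ln (p/k) = - ln (k/p)" using assms by (simp add: ln_div)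
  ultimately have "p * ln (p/k) \<ge> p * (1 - k/p)" using assms
    by (intro mult_left_mono) auto
  thus ?thesis using assms by (simp add: algebra_simps)
qed

lemma Tlow: fixes p q A :: real assumes "p \<ge> 0" "q \<ge> 0" "A > 0"
  shows "p - A * ((p+q)/2) \<le> (if p = 0 then 0 else p * ln (p / ((p+q)/2))) - p * ln A"
proof (cases "p = 0")
  case True thus ?thesis using assms by simp
next
  case False
  hence pp: "p > 0" using assms by simp
  hence mp: "(p+q)/2 > 0" using assms by simp
  have "p - A * ((p+q)/2) \<le> p * ln (p / (A * ((p+q)/2)))"
    using gibbs[OF pp, of "A * ((p+q)/2)"] mp assms by (simp del: times_divide_eq_right)
  also have "ln (p / (A * ((p+q)/2))) = ln (p / ((p+q)/2)) - ln A"
    using pp mp assms by (simp add: ln_div ln_mult)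
  finally show ?thesis using False by (simp add: algebra_simps)
qed

lemma key: fixes p q A B :: real assumes "p \<ge> 0" "q \<ge> 0" "A > 0" "B > 0" "A + B = 2"
  shows "p * ln A + q * ln B \<le> (if p = 0 then 0 else p * ln (p / ((p+q)/2)))
                              + (if q = 0 then 0 else q * ln (q / ((p+q)/2)))"
proof -
  have 1: "p - A * ((p+q)/2) \<le> (if p = 0 then 0 else p * ln (p / ((p+q)/2))) - p * ln A"
    using Tlow assms by blast
  have 2: "q - B * ((p+q)/2) \<le> (if q = 0 then 0 else q * ln (q / ((p+q)/2))) - q * ln B"
    using Tlow[of q p B] assms by (metis add.commute)
  have 3: "p - A * ((p+q)/2) + (q - B * ((p+q)/2)) = 0"
  proof -
    have "B = 2 - A" using assms(5) by simp
    show ?thesis by (simp only: \<open>B = 2 - A\<close>) (simp add: field_simps)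
  qed
  show ?thesis using 1 2 3 by linarith
qed

lemma Tbound: fixes p q :: real assumes "p \<ge> 0" "q \<ge> 0"
  shows "\<bar>if p = 0 then 0 else p * ln (p / ((p+q)/2))\<bar> \<le> p * ln 2 + q"
proof (cases "p = 0")
  case True thus ?thesis using assms by simp
next
  case False
  hence pp: "p > 0" using assms by simp
  hence mp: "(p+q)/2 > 0" using assms by simp
  have lo: "p - (p+q)/2 \<le> p * ln (p / ((p+q)/2))" using gibbs[OF pp mp] .
  have "p / ((p+q)/2) \<le> 2" using assms mp by (simp add: divide_simps)
  hence "ln (p / ((p+q)/2)) \<le> ln 2" using pp mp by (subst ln_le_cancel_iff) auto
  hence hi: "p * ln (p / ((p+q)/2)) \<le> p * ln 2" using pp by (intro mult_left_mono) auto
  have "0 \<le> p * ln 2" using pp by simp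
  have "p - (p+q)/2 \<ge> - q" using assms by (simp add: field_simps)
  hence "- (p * ln (p / ((p+q)/2))) \<le> p * ln 2 + q" using lo \<open>0 \<le> p * ln 2\<close> by linarith
  moreover have "p * ln (p / ((p+q)/2)) \<le> p * ln 2 + q" using hi assms by linarith
  ultimately show ?thesis using False by (simp add: abs_le_iff del: times_divide_eq_right divide_divide_eq_right)
qed

lemma part1:
  fixes \<epsilon> :: real assumes "0 \<le> \<epsilon>" and "\<epsilon> \<le> 1"
  shows "2 * bin_rel_entropy ((1 - \<epsilon>) / 2) (1 / 2)
           = (1 + \<epsilon>) * ln (1 + \<epsilon>) + (1 - \<epsilon>) * ln (1 - \<epsilon>)"
proof (cases "\<epsilon> = 1")
  case True thus ?thesis by (simp add: bin_rel_entropy_def)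
next
  case False
  hence "\<epsilon> < 1" using assms by simp
  have a: "((1 - \<epsilon>) / 2) / (1/2) = 1 - \<epsilon>" by simp
  have b: "(1 - (1 - \<epsilon>) / 2) / (1 - 1/2) = 1 + \<epsilon>" by (simp add: field_simps)
  have c: "1 - (1 - \<epsilon>) / 2 = (1 + \<epsilon>)/2" by (simp add: field_simps)
  show ?thesis unfolding bin_rel_entropy_def a b using \<open>\<epsilon> < 1\<close> assms
    by (simp add: c field_simps)
qed

lemma part3:
  fixes \<epsilon> :: real assumes "0 \<le> \<epsilon>" and "\<epsilon> \<le> 1"
  shows "\<exists>P Q :: bool pmf.
           pmf P False = (1 - \<epsilon>) / 2 \<and> pmf P True = (1 + \<epsilon>) / 2 \<and>
           pmf Q False = (1 + \<epsilon>) / 2 \<and> pmf Q True = (1 - \<epsilon>) / 2 \<and>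
           tv_dist P Q = \<epsilon> \<and>
           cap_disc P Q = 2 * bin_rel_entropy ((1 - \<epsilon>) / 2) (1 / 2)"
proof (intro exI conjI)
  let ?P = "bernoulli_pmf ((1 + \<epsilon>)/2)" and ?Q = "bernoulli_pmf ((1 - \<epsilon>)/2)"
  have r1: "0 \<le> (1 + \<epsilon>)/2" "(1 + \<epsilon>)/2 \<le> 1" "0 \<le> (1 - \<epsilon>)/2" "(1 - \<epsilon>)/2 \<le> 1"
    using assms by auto
  show pF: "pmf ?P False = (1 - \<epsilon>) / 2" using r1 by (simp add: field_simps)
  show pT: "pmf ?P True = (1 + \<epsilon>) / 2" using r1 by simp
  show qF: "pmf ?Q False = (1 + \<epsilon>) / 2" using r1 by (simp add: field_simps)
  show qT: "pmf ?Q True = (1 - \<epsilon>) / 2" using r1 by simp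
  have U: "(UNIV :: bool set) = {False, True}" by auto
  have S: "\<And>f :: bool \<Rightarrow> real. infsum f UNIV = f False + f True" unfolding U by simp
  show "tv_dist ?P ?Q = \<epsilon>" unfolding tv_dist_def U
    using pF pT qF qT assms by (simp add: field_simps)
  have M: "(\<lambda>x. (pmf ?P x + pmf ?Q x) / 2) = (\<lambda>_. 1/2)"
  proof
    fix x show "(pmf ?P x + pmf ?Q x) / 2 = 1/2"
      using pF pT qF qT by (cases x) (simp_all add: field_simps)
  qed
  have e1: "rel_entropy (pmf ?P) (\<lambda>_. 1/2) = bin_rel_entropy ((1 - \<epsilon>) / 2) (1 / 2)"
    unfolding rel_entropy_def bin_rel_entropy_def S pF pT by (simp add: field_simps)
  have e2: "rel_entropy (pmf ?Q) (\<lambda>_. 1/2) = bin_rel_entropy ((1 - \<epsilon>) / 2) (1 / 2)"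
    unfolding rel_entropy_def bin_rel_entropy_def S qF qT by (simp add: field_simps)
  show "cap_disc ?P ?Q = 2 * bin_rel_entropy ((1 - \<epsilon>) / 2) (1 / 2)"
    unfolding cap_disc_def Let_def M e1 e2 by simp
qed

lemma part2:
  fixes \<epsilon> :: real and P Q :: "'a pmf"
  assumes "0 \<le> \<epsilon>" and "\<epsilon> \<le> 1" and tv: "tv_dist P Q = \<epsilon>"
  shows "(1 + \<epsilon>) * ln (1 + \<epsilon>) + (1 - \<epsilon>) * ln (1 - \<epsilon>) \<le> cap_disc P Q"
proof -
  define p where "p = pmf P"
  define q where "q = pmf Q"
  define T1 where "T1 = (\<lambda>x. if p x = 0 then 0 else p x * ln (p x / ((p x + q x)/2)))"
  define T2 where "T2 = (\<lambda>x. if q x = 0 then 0 else q x * ln (q x / ((p x + q x)/2)))"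
  have p0: "\<And>x. p x \<ge> 0" and q0: "\<And>x. q x \<ge> 0" by (simp_all add: p_def q_def)
  have cap: "cap_disc P Q = infsum T1 UNIV + infsum T2 UNIV"
    unfolding cap_disc_def Let_def rel_entropy_def T1_def T2_def p_def q_def ..
  have hp: "(p has_sum 1) UNIV" unfolding p_def
    using pmf_summ pmf_infsum by (metis has_sum_infsum)
  have hq: "(q has_sum 1) UNIV" unfolding q_def
    using pmf_summ pmf_infsum by (metis has_sum_infsum)
  have hpq: "((\<lambda>x. p x + q x) has_sum 2) UNIV" using has_sum_add[OF hp hq] by simp
  have sabs: "(\<lambda>x. \<bar>p x - q x\<bar>) summable_on UNIV"
    by (rule summable_on_comparison_test[OF has_sum_imp_summable[OF hpq]])
       (use p0 q0 in \<open>auto simp: abs_le_iff\<close>)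
  have "infsum (\<lambda>x. \<bar>p x - q x\<bar>) UNIV = 2 * \<epsilon>"
    using tv unfolding tv_dist_def p_def q_def by simp
  hence habs: "((\<lambda>x. \<bar>p x - q x\<bar>) has_sum (2 * \<epsilon>)) UNIV"
    using sabs by (metis has_sum_infsum)
  have sB: "(\<lambda>x. p x * ln 2 + q x) summable_on UNIV"
    by (rule has_sum_imp_summable[OF has_sum_add[OF has_sum_cmult_left[OF hp, of "ln 2"] hq]])
  have sB': "(\<lambda>x. q x * ln 2 + p x) summable_on UNIV"
    by (rule has_sum_imp_summable[OF has_sum_add[OF has_sum_cmult_left[OF hq, of "ln 2"] hp]])
  have sT1: "T1 summable_on UNIV"
  proof (rule abs_summable_summable)
    show "(\<lambda>x. norm (T1 x)) summable_on UNIV"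
  proof (rule summable_on_comparison_test[OF sB])
    fix x show "norm (T1 x) \<le> p x * ln 2 + q x"
      using Tbound[of "p x" "q x"] p0 q0 unfolding T1_def real_norm_def by blast
  qed simp
  qed
  have sT2: "T2 summable_on UNIV"
  proof (rule abs_summable_summable)
    show "(\<lambda>x. norm (T2 x)) summable_on UNIV"
  proof (rule summable_on_comparison_test[OF sB'])
    fix x show "norm (T2 x) \<le> q x * ln 2 + p x"
      using Tbound[of "q x" "p x"] p0 q0 unfolding T2_def real_norm_def by (metis add.commute)
  qed simp
  qed
  have capT: "cap_disc P Q = infsum (\<lambda>x. T1 x + T2 x) UNIV"
    unfolding cap using infsum_add[OF sT1 sT2] by simp
  have sT: "(\<lambda>x. T1 x + T2 x) summable_on UNIV" using summable_on_add[OF sT1 sT2] .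
  show ?thesis
  proof (cases "\<epsilon> = 1")
    case False
    hence e1: "\<epsilon> < 1" using assms by simp
    define A where "A = 1 + \<epsilon>"
    define B where "B = 1 - \<epsilon>"
    have A0: "A > 0" and B0: "B > 0" and AB: "A + B = 2" using assms e1 by (auto simp: A_def B_def)
    define c1 where "c1 = (ln A + ln B)/2"
    define c2 where "c2 = (ln A - ln B)/2"
    define L where "L = (\<lambda>x. c1 * (p x + q x) + c2 * \<bar>p x - q x\<bar>)"
    have hL: "(L has_sum (c1 * 2 + c2 * (2 * \<epsilon>))) UNIV"
      unfolding L_def by (intro has_sum_add has_sum_cmult_right hpq habs)
    have val: "c1 * 2 + c2 * (2 * \<epsilon>) = (1 + \<epsilon>) * ln (1 + \<epsilon>) + (1 - \<epsilon>) * ln (1 - \<epsilon>)"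
      unfolding c1_def c2_def A_def B_def by (simp add: field_simps)
    have pw: "L x \<le> T1 x + T2 x" for x
    proof (cases "p x \<ge> q x")
      case True
      have "L x = p x * ln A + q x * ln B" unfolding L_def c1_def c2_def using True
        by (simp add: field_simps)
      also have "\<dots> \<le> T1 x + T2 x" unfolding T1_def T2_def
        by (rule key[OF p0 q0 A0 B0 AB])
      finally show ?thesis .
    next
      case False
      have "L x = p x * ln B + q x * ln A" unfolding L_def c1_def c2_def using False
        by (simp add: field_simps)
      also have "\<dots> \<le> T1 x + T2 x" unfolding T1_def T2_def
        by (rule key[OF p0 q0 B0 A0]) (use AB in simp)
      finally show ?thesis .
    qed
    have "infsum L UNIV \<le> infsum (\<lambda>x. T1 x + T2 x) UNIV"
      by (rule infsum_mono[OF has_sum_imp_summable[OF hL] sT pw])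
    thus ?thesis using infsumI[OF hL] val capT by simp
  next
    case True
    define Z where "Z = (\<lambda>x. (p x + q x) + (-1) * \<bar>p x - q x\<bar>)"
    have hz: "(Z has_sum (2 + (-1) * (2 * \<epsilon>))) UNIV"
      unfolding Z_def by (intro has_sum_add has_sum_cmult_right hpq habs)
    have Z0: "infsum Z UNIV \<le> 0" using infsumI[OF hz] True by simp
    have z: "Z x = 0" for x
      by (rule nonneg_infsum_le_0D[where f=Z and A=UNIV, OF Z0 has_sum_imp_summable[OF hz]])
         (use p0 q0 in \<open>auto simp: Z_def abs_if\<close>)
    have pw: "T1 x + T2 x = (p x + q x) * ln 2" for x
    proof -
      have "p x = 0 \<or> q x = 0" using z[of x] p0[of x] q0[of x] unfolding Z_def by (auto simp: abs_if split: if_splits)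
      thus ?thesis unfolding T1_def T2_def by (auto simp: algebra_simps)
    qed
    have "((\<lambda>x. T1 x + T2 x) has_sum (2 * ln 2)) UNIV"
      unfolding pw using has_sum_cmult_left[OF hpq, of "ln 2"] by simp
    hence "cap_disc P Q = 2 * ln 2" using capT infsumI by metis
    thus ?thesis using True by simp
  qed
qed

theorem proposition3:
  fixes \<epsilon> :: real
  assumes "0 \<le> \<epsilon>" and "\<epsilon> \<le> 1"
  shows "(2 * bin_rel_entropy ((1 - \<epsilon>) / 2) (1 / 2)
           = (1 + \<epsilon>) * ln (1 + \<epsilon>) + (1 - \<epsilon>) * ln (1 - \<epsilon>)) \<and>
         (\<forall>P Q :: ('a::countable) pmf. tv_dist P Q = \<epsilon> \<longrightarrow>
           2 * bin_rel_entropy ((1 - \<epsilon>) / 2) (1 / 2) \<le> cap_disc P Q) \<and>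
         (\<exists>P Q :: bool pmf.
           pmf P False = (1 - \<epsilon>) / 2 \<and> pmf P True = (1 + \<epsilon>) / 2 \<and>
           pmf Q False = (1 + \<epsilon>) / 2 \<and> pmf Q True = (1 - \<epsilon>) / 2 \<and>
           tv_dist P Q = \<epsilon> \<and>
           cap_disc P Q = 2 * bin_rel_entropy ((1 - \<epsilon>) / 2) (1 / 2))"
  using part1[OF assms] part2[OF assms] part3[OF assms] by auto

end
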